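(* Let $S\subseteq 2^E$ be a powerful set with $|E|=n$ and $r_S(E)=n-1$. Then $S$ has a deletable element $e\in E$.
   Context: A set $S\subseteq 2^E$ ($E$ finite) is powerful if for every $X\subseteq E$ the number of members of $S$ contained in $X$ is a power of 2. Its rank function is $r_S(X)=\log_2\big(|S|/|\{Y\in S:Y\subseteq E\setminus X\}|\big)$. Let $f$ be the $\{0,1\}$-valued indicator function of $S$. For $e\in E$ let $g(X)=f(X)+f(X\cup\{e\})$ for $X\subseteq E\setminus\{e\}$; the element $e$ is deletable if $\frac{1}{g(\emptyset)}g$ is $\{0,1\}$-valued, i.e. the deletion of $e$ (the multiset over $E\setminus\{e\}$ with indicator $g$) is, up to scaling, a powerful set, namely $\{X\subseteq E\setminus\{e\}: X\in S\text{ or }X\cup\{e\}\in S\}$. *)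

theory Defs
  imports Main Complex_Main
begin

definition powerful :: "'a set \<Rightarrow> 'a set set \<Rightarrow> bool" where
  "powerful E S \<longleftrightarrow> finite E \<and> S \<subseteq> Pow E \<and>
     (\<forall>X. X \<subseteq> E \<longrightarrow> (\<exists>k::nat. card {Y \<in> S. Y \<subseteq> X} = 2 ^ k))"

definition rankS :: "'a set \<Rightarrow> 'a set set \<Rightarrow> 'a set \<Rightarrow> real" where
  "rankS E S X = log 2 (real (card S) / real (card {Y \<in> S. Y \<subseteq> E - X}))"

definition indS :: "'a set set \<Rightarrow> 'a set \<Rightarrow> real" where
  "indS S X = (if X \<in> S then 1 else 0)"

definition delg :: "'a set set \<Rightarrow> 'a \<Rightarrow> 'a set \<Rightarrow> real" where
  "delg S e X = indS S X + indS S (X \<union> {e})"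

definition deletable :: "'a set \<Rightarrow> 'a set set \<Rightarrow> 'a \<Rightarrow> bool" where
  "deletable E S e \<longleftrightarrow> e \<in> E \<and>
     (\<forall>X. X \<subseteq> E - {e} \<longrightarrow> (1 / delg S e {}) * delg S e X \<in> {0, 1})"

end

theory Submission
  imports Defs
begin

definition isp :: "nat \<Rightarrow> bool" where "isp v \<longleftrightarrow> (\<exists>k. v = 2 ^ k)"

lemma isp_ge1: "isp v \<Longrightarrow> v \<ge> 1"
  unfolding isp_def by auto

lemma isp_even: "isp v \<Longrightarrow> v \<ge> 2 \<Longrightarrow> even v"
proof -
  assume "isp v" "v \<ge> 2"
  then obtain k where k: "v = 2 ^ k" unfolding isp_def by auto
  with \<open>v \<ge> 2\<close> have "k \<noteq> 0" by (cases k) auto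
  then show ?thesis using k by (cases k) auto
qed

lemma isp_odd: "isp v \<Longrightarrow> odd v \<Longrightarrow> v = 1"
proof -
  assume "isp v" "odd v"
  then obtain k where k: "v = 2 ^ k" unfolding isp_def by auto
  with \<open>odd v\<close> show ?thesis by (cases k) auto
qed

lemma isp_lt: "isp v \<Longrightarrow> v < 2 * 2 ^ j \<Longrightarrow> v \<le> 2 ^ j"
proof -
  assume "isp v" "v < 2 * 2 ^ j"
  then obtain k where k: "v = 2 ^ k" unfolding isp_def by auto
  with \<open>v < 2 * 2 ^ j\<close> have "(2::nat) ^ k < 2 ^ Suc j" by (metis power_Suc)
  then have "k < Suc j" by (rule power_less_imp_less_exp[rotated]) simp
  then show "v \<le> 2 ^ j" using k by (simp add: power_increasing)
qed

lemma isp_half: "isp v \<Longrightarrow> v \<le> 2 ^ j \<Longrightarrow> v \<noteq> 2 ^ j \<Longrightarrow> 2 * v \<le> 2 ^ j"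
proof -
  assume "isp v" "v \<le> 2 ^ j" "v \<noteq> 2 ^ j"
  then obtain k where k: "v = 2 ^ k" unfolding isp_def by auto
  with \<open>v \<le> 2 ^ j\<close> \<open>v \<noteq> 2 ^ j\<close> have "(2::nat) ^ k < 2 ^ j" by simp
  then have "k < j" using power_strict_increasing_iff[of "2::nat"] by simp
  then have "Suc k \<le> j" by simp
  then have "(2::nat) ^ Suc k \<le> 2 ^ j" using power_increasing[of "Suc k" j "2::nat"] by simp
  then show ?thesis using k by simp
qed

lemma isp_add: "isp (2 ^ j + b) \<Longrightarrow> b \<le> 2 ^ j \<Longrightarrow> b = 0 \<or> b = 2 ^ j"
proof -
  assume "isp (2 ^ j + b)" "b \<le> 2 ^ j"
  then obtain k where k: "2 ^ j + b = 2 ^ k" unfolding isp_def by auto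
  have "(2::nat) ^ j \<le> 2 ^ k" using k by (metis le_add1)
  then have "j \<le> k" by (rule power_le_imp_le_exp[rotated]) simp
  have "(2::nat) ^ k \<le> 2 ^ Suc j" using k \<open>b \<le> 2 ^ j\<close> by simp
  then have "k \<le> Suc j" by (rule power_le_imp_le_exp[rotated]) simp
  show ?thesis
  proof (cases "k = j")
    case True then show ?thesis using k by simp
  next
    case False then have "k = Suc j" using \<open>j \<le> k\<close> \<open>k \<le> Suc j\<close> by simp
    then show ?thesis using k by simp
  qed
qed

definition ind :: "'a set set \<Rightarrow> 'a set \<Rightarrow> nat" where
  "ind S X = (if X \<in> S then 1 else 0)"

definition cnt :: "'a set set \<Rightarrow> 'a set \<Rightarrow> nat" where
  "cnt S X = (\<Sum>Y\<in>Pow X. ind S Y)"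

lemma ind_le1: "ind S X \<le> 1" by (simp add: ind_def)

lemma sum_Pow_insert:
  assumes "finite X" "a \<notin> X"
  shows "(\<Sum>Y\<in>Pow (insert a X). w Y) = (\<Sum>Y\<in>Pow X. w Y) + (\<Sum>Y\<in>Pow X. w (insert a Y))"
proof -
  have inj: "inj_on (insert a) (Pow X)"
    using assms(2) by (auto simp: inj_on_def)
  have disj: "Pow X \<inter> insert a ` Pow X = {}" using assms(2) by auto
  have "(\<Sum>Y\<in>Pow (insert a X). w Y) = (\<Sum>Y\<in>Pow X \<union> insert a ` Pow X. w Y)"
    by (simp add: Pow_insert)
  also have "\<dots> = (\<Sum>Y\<in>Pow X. w Y) + (\<Sum>Y\<in>insert a ` Pow X. w Y)"
    using disj assms(1) by (simp add: sum.union_disjoint)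
  also have "(\<Sum>Y\<in>insert a ` Pow X. w Y) = (\<Sum>Y\<in>Pow X. w (insert a Y))"
    using inj by (simp add: sum.reindex)
  finally show ?thesis .
qed

lemma cnt_card: "finite X \<Longrightarrow> card {Y \<in> S. Y \<subseteq> X} = cnt S X"
proof -
  assume "finite X"
  have "{Y \<in> S. Y \<subseteq> X} = {Y \<in> Pow X. Y \<in> S}" by auto
  then have "card {Y \<in> S. Y \<subseteq> X} = (\<Sum>Y\<in>{Y \<in> Pow X. Y \<in> S}. 1)" by simp
  also have "\<dots> = cnt S X" unfolding cnt_def ind_def
    using \<open>finite X\<close> sum.inter_filter[of "Pow X" "\<lambda>_. 1::nat" "\<lambda>Y. Y \<in> S"] by simp
  finally show ?thesis .
qed

lemma sum_Pow_split_top: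
  assumes "finite X"
  shows "(\<Sum>Y\<in>Pow X. w Y) = w X + (\<Sum>Y\<in>Pow X - {X}. w Y)"
  using assms by (simp add: sum.remove[of "Pow X" X])


lemma sum_Pow_single: "(\<Sum>Y\<in>Pow {a}. f Y) = f {} + f {a}"
  using sum_Pow_insert[of "{}" a f] by simp

lemma sum_Pow_pair: "a \<noteq> b \<Longrightarrow> (\<Sum>Y\<in>Pow {a, b}. f Y) = f {} + f {b} + f {a} + f {a, b}"
  using sum_Pow_insert[of "{b}" a f] sum_Pow_single[of f b] sum_Pow_single[of "\<lambda>Y. f (insert a Y)" b]
  by (simp add: add.assoc)

lemma isp_fix: "even N \<Longrightarrow> N \<ge> 4 \<Longrightarrow> isp (v + (N - 1)) \<Longrightarrow> v \<le> 2 \<Longrightarrow> v = 1"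
proof (rule ccontr)
  assume "even N" "N \<ge> 4" "isp (v + (N - 1))" "v \<le> 2" "v \<noteq> 1"
  then have "v = 0 \<or> v = 2" by auto
  then have "odd (v + (N - 1))" using \<open>even N\<close> \<open>N \<ge> 4\<close> by auto
  then have "v + (N - 1) = 1" using isp_odd \<open>isp (v + (N - 1))\<close> by blast
  then show False using \<open>N \<ge> 4\<close> by simp
qed

locale pws =
  fixes E :: "'a set" and S :: "'a set set"
  assumes finE: "finite E" and subE: "S \<subseteq> Pow E" and pw: "\<And>X. X \<subseteq> E \<Longrightarrow> isp (cnt S X)"
begin

lemma fin_sub: "X \<subseteq> E \<Longrightarrow> finite X" using finE finite_subset by blast

lemma empty_in: "{} \<in> S"
proof -
  have "isp (cnt S {})" using pw by simp
  then have "cnt S {} \<ge> 1" by (rule isp_ge1)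
  then show ?thesis by (simp add: cnt_def ind_def split: if_splits)
qed

lemma cnt_insert: "finite X \<Longrightarrow> e \<notin> X \<Longrightarrow>
   cnt S (insert e X) = cnt S X + (\<Sum>Y\<in>Pow X. ind S (insert e Y))"
  unfolding cnt_def by (rule sum_Pow_insert)

lemma cnt_insert2: "finite X \<Longrightarrow> e \<notin> X \<Longrightarrow>
   cnt S (insert e X) = (\<Sum>Y\<in>Pow X. ind S Y + ind S (insert e Y))"
  using cnt_insert by (simp add: sum.distrib cnt_def)

lemma singleton_toggle:
  assumes "e \<in> E" "{e} \<in> S" "X \<subseteq> E - {e}"
  shows "X \<in> S \<longleftrightarrow> insert e X \<in> S"
proof -
  have "finite X" using assms(3) fin_sub by blast
  then show ?thesis using assms(3)
  proof (induction X rule: finite_psubset_induct)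
    case (psubset X)
    have IH: "ind S (insert e Y) = ind S Y" if "Y \<in> Pow X - {X}" for Y
    proof -
      have "Y \<subset> X" using that by auto
      moreover have "Y \<subseteq> E - {e}" using that psubset.prems by auto
      ultimately show ?thesis using psubset.IH by (simp add: ind_def)
    qed
    have eX: "e \<notin> X" using psubset.prems by auto
    have "cnt S (insert e X) = (\<Sum>Y\<in>Pow X. ind S Y + ind S (insert e Y))"
      using cnt_insert2 psubset.hyps eX by blast
    also have "\<dots> = (ind S X + ind S (insert e X)) + (\<Sum>Y\<in>Pow X - {X}. ind S Y + ind S (insert e Y))"
      using sum_Pow_split_top psubset.hyps by blast
    also have "(\<Sum>Y\<in>Pow X - {X}. ind S Y + ind S (insert e Y)) = (\<Sum>Y\<in>Pow X - {X}. 2 * ind S Y)"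
      using IH by (intro sum.cong) auto
    also have "\<dots> = 2 * (\<Sum>Y\<in>Pow X - {X}. ind S Y)" by (simp add: sum_distrib_left)
    finally have c: "cnt S (insert e X) = (ind S X + ind S (insert e X)) + 2 * (\<Sum>Y\<in>Pow X - {X}. ind S Y)" .
    have "ind S {} + ind S (insert e {}) \<le> (\<Sum>Y\<in>Pow X. ind S Y + ind S (insert e Y))"
      by (rule member_le_sum) (use psubset.hyps in auto)
    then have ge2: "cnt S (insert e X) \<ge> 2"
      using cnt_insert2 psubset.hyps eX empty_in assms(2) by (simp add: ind_def)
    have "insert e X \<subseteq> E" using psubset.prems assms(1) by auto
    then have "isp (cnt S (insert e X))" by (rule pw)
    then have "even (cnt S (insert e X))" using ge2 isp_even by blast
    then have "even (ind S X + ind S (insert e X))" using c by simp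
    then show ?case by (simp add: ind_def split: if_splits)
  qed
qed

lemma ub:
  assumes ns: "\<forall>x\<in>E. {x} \<notin> S" and W: "W \<subseteq> E" "W \<noteq> {}"
  shows "cnt S W \<le> 2 ^ (card W - 1)"
proof -
  obtain w where w: "w \<in> W" using W by auto
  have fW: "finite W" using W fin_sub by blast
  have "{w} \<in> Pow W" using w by auto
  then have "cnt S W = ind S {w} + (\<Sum>Y\<in>Pow W - {{w}}. ind S Y)"
    unfolding cnt_def using fW sum.remove[of "Pow W" "{w}" "ind S"] by simp
  also have "ind S {w} = 0" using ns w W by (auto simp: ind_def)
  also have "(\<Sum>Y\<in>Pow W - {{w}}. ind S Y) \<le> (\<Sum>Y\<in>Pow W - {{w}}. 1)"
    by (rule sum_mono) (simp add: ind_def)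
  also have "(\<Sum>Y\<in>Pow W - {{w}}. (1::nat)) = card (Pow W - {{w}})" by simp
  also have "card (Pow W - {{w}}) = 2 ^ card W - 1"
    using fW \<open>{w} \<in> Pow W\<close> by (simp add: card_Pow)
  finally have "cnt S W \<le> 2 ^ card W - 1" by simp
  moreover have "(0::nat) < 2 ^ card W" by simp
  ultimately have "cnt S W < 2 ^ card W" by linarith
  moreover have "card W \<ge> 1" using fW W by (simp add: Suc_leI card_gt_0_iff)
  moreover have "(2::nat) ^ card W = 2 * 2 ^ (card W - 1)" using \<open>card W \<ge> 1\<close> by (cases "card W") auto
  ultimately have "cnt S W < 2 * 2 ^ (card W - 1)" by linarith
  then show ?thesis using isp_lt pw W by blast
qed

lemma dom_exact:
  assumes ns: "\<forall>x\<in>E. {x} \<notin> S" and V: "V \<subseteq> E" "e \<in> V"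
    and dom: "\<forall>y\<in>V. y \<noteq> e \<longrightarrow> {e, y} \<in> S" and X: "X \<subseteq> V - {e}"
  shows "ind S X + ind S (insert e X) = 1"
proof -
  have "finite X" using X V fin_sub by (meson Diff_subset finite_subset)
  then show ?thesis using X
  proof (induction X rule: finite_psubset_induct)
    case (psubset X)
    have eX: "e \<notin> X" using psubset.prems by auto
    show ?case
    proof (cases "card X \<le> 1")
      case True
      then have "X = {} \<or> (\<exists>y. X = {y})" using psubset.hyps
        by (metis One_nat_def card_0_eq card_1_singleton_iff le_Suc_eq le_zero_eq)
      then show ?thesis
      proof
        assume "X = {}" then show ?thesis using empty_in ns V by (auto simp: ind_def)
      next
        assume "\<exists>y. X = {y}"
        then obtain y where y: "X = {y}" by blast
        then have "y \<in> V" "y \<noteq> e" using psubset.prems by auto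
        then have "{e, y} \<in> S" "{y} \<notin> S" using dom ns V by auto
        then show ?thesis using y by (simp add: ind_def)
      qed
    next
      case False
      then have c2: "card X \<ge> 2" by simp
      have IH: "ind S Y + ind S (insert e Y) = 1" if "Y \<in> Pow X - {X}" for Y
        using that psubset.IH psubset.prems by auto
      have "cnt S (insert e X) = (\<Sum>Y\<in>Pow X. ind S Y + ind S (insert e Y))"
        using cnt_insert2 psubset.hyps eX by blast
      also have "\<dots> = (ind S X + ind S (insert e X)) + (\<Sum>Y\<in>Pow X - {X}. ind S Y + ind S (insert e Y))"
        using sum_Pow_split_top psubset.hyps by blast
      also have "(\<Sum>Y\<in>Pow X - {X}. ind S Y + ind S (insert e Y)) = (\<Sum>Y\<in>Pow X - {X}. 1)"
        using IH by (intro sum.cong) auto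
      also have "\<dots> = 2 ^ card X - 1" using psubset.hyps by (simp add: card_Pow)
      finally have c: "cnt S (insert e X) = (ind S X + ind S (insert e X)) + (2 ^ card X - 1)" .
      have "insert e X \<subseteq> E" using psubset.prems V by auto
      then have "isp (cnt S (insert e X))" by (rule pw)
      then have h: "isp ((ind S X + ind S (insert e X)) + (2 ^ card X - 1))" using c by simp
      have "(2::nat) ^ card X \<ge> 2 ^ 2" using c2 by (intro power_increasing) auto
      moreover have "even ((2::nat) ^ card X)" using c2 by simp
      moreover have "ind S X + ind S (insert e X) \<le> 2" using ind_le1[of S X] ind_le1[of S "insert e X"] by simp
      ultimately show ?thesis using isp_fix[OF _ _ h] by simp
    qed
  qed
qed

lemma main_dom:
  assumes ns: "\<forall>x\<in>E. {x} \<notin> S"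
  shows "W \<subseteq> E \<Longrightarrow> W \<noteq> {} \<Longrightarrow> cnt S W = 2 ^ (card W - 1) \<Longrightarrow>
         \<exists>e\<in>W. \<forall>y\<in>W. y \<noteq> e \<longrightarrow> {e, y} \<in> S"
proof -
  assume WE0: "W \<subseteq> E"
  then have "finite W" using fin_sub by blast
  then show "W \<subseteq> E \<Longrightarrow> W \<noteq> {} \<Longrightarrow> cnt S W = 2 ^ (card W - 1) \<Longrightarrow>
         \<exists>e\<in>W. \<forall>y\<in>W. y \<noteq> e \<longrightarrow> {e, y} \<in> S"
  proof (induction W rule: finite_psubset_induct)
    case (psubset W)
    note WE = psubset.prems(1) and Wne = psubset.prems(2) and cW = psubset.prems(3)
    note fW = psubset.hyps
    show ?case
    proof (cases "\<forall>x\<in>W. \<forall>y\<in>W. x \<noteq> y \<longrightarrow> {x, y} \<in> S")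
      case allp: True
      obtain e where eW: "e \<in> W" using Wne by blast
      have "\<forall>y\<in>W. y \<noteq> e \<longrightarrow> {e, y} \<in> S"
      proof (intro ballI impI)
        fix y assume yW: "y \<in> W" and ye: "y \<noteq> e"
        from ye have ey: "e \<noteq> y" by simp
        show "{e, y} \<in> S" using allp[rule_format, OF eW yW ey] .
      qed
      then show ?thesis using eW by blast
    next
      case False
      then obtain x y where xy: "x \<in> W" "y \<in> W" "x \<noteq> y" "{x, y} \<notin> S" by blast
      define W' where "W' = W - {x, y}"
      have fW': "finite W'" using fW W'_def by simp
      have cW': "card W' = card W - 2" using xy fW unfolding W'_def by (simp add: card_Diff_subset)
      have c2: "card W \<ge> 2"
      proof -
        have "{x, y} \<subseteq> W" using xy by auto
        then have "card {x, y} \<le> card W" using fW by (rule card_mono[rotated])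
        then show ?thesis using xy by simp
      qed
      have Wx: "W - {x} = insert y W'" and Wy: "W - {y} = insert x W'" using xy unfolding W'_def by auto
      have Wxy: "W = insert x (insert y W')" using xy unfolding W'_def by auto
      have xW': "x \<notin> insert y W'" "y \<notin> W'" "x \<notin> W'" using xy unfolding W'_def by auto
      have "cnt S W = cnt S (insert y W') + (\<Sum>Y\<in>Pow (insert y W'). ind S (insert x Y))"
        unfolding Wxy using fW' xW'(1) by (intro cnt_insert) simp_all
      also have "(\<Sum>Y\<in>Pow (insert y W'). ind S (insert x Y)) =
          (\<Sum>Y\<in>Pow W'. ind S (insert x Y)) + (\<Sum>Y\<in>Pow W'. ind S (insert x (insert y Y)))"
        by (rule sum_Pow_insert[OF fW' xW'(2)])
      finally have c1: "cnt S W = cnt S (W - {x}) + (\<Sum>Y\<in>Pow W'. ind S (insert x Y))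
          + (\<Sum>Y\<in>Pow W'. ind S (insert x (insert y Y)))" unfolding Wx by (simp only: add.assoc)
      have "cnt S (W - {y}) = cnt S W' + (\<Sum>Y\<in>Pow W'. ind S (insert x Y))"
        unfolding Wy by (rule cnt_insert[OF fW' xW'(3)])
      then have c3: "(\<Sum>Y\<in>Pow W'. ind S (insert x Y)) \<le> cnt S (W - {y})" by simp
      have "(\<Sum>Y\<in>Pow W'. ind S (insert x (insert y Y))) =
          ind S (insert x (insert y {})) + (\<Sum>Y\<in>Pow W' - {{}}. ind S (insert x (insert y Y)))"
        using fW' sum.remove[of "Pow W'" "{}" "\<lambda>Y. ind S (insert x (insert y Y))"] by simp
      also have "ind S (insert x (insert y {})) = 0" using xy by (simp add: ind_def)
      also have "(\<Sum>Y\<in>Pow W' - {{}}. ind S (insert x (insert y Y))) \<le> (\<Sum>Y\<in>Pow W' - {{}}. 1)"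
        by (rule sum_mono) (simp add: ind_def)
      also have "(\<Sum>Y\<in>Pow W' - {{}}. (1::nat)) = 2 ^ card W' - 1" using fW' by (simp add: card_Pow)
      finally have c4: "(\<Sum>Y\<in>Pow W'. ind S (insert x (insert y Y))) \<le> 2 ^ card W' - 1" by simp
      have Wxne: "W - {x} \<noteq> {}" and Wyne: "W - {y} \<noteq> {}" using xy by auto
      have cWx: "card (W - {x}) = card W - 1" "card (W - {y}) = card W - 1" using xy fW by auto
      have ubx: "cnt S (W - {x}) \<le> 2 ^ card W'" using ub[OF ns _ Wxne] WE cWx cW' c2
        by (metis Diff_subset diff_diff_left one_add_one subset_trans)
      have uby: "cnt S (W - {y}) \<le> 2 ^ card W'" using ub[OF ns _ Wyne] WE cWx cW' c2
        by (metis Diff_subset diff_diff_left one_add_one subset_trans)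
      have pw2: "(2::nat) ^ (card W - 1) = 2 * 2 ^ card W'" using cW' c2
        by (metis Suc_diff_Suc Suc_1 diff_Suc_1 less_le_trans lessI power_Suc)
      obtain x0 where x0: "x0 \<in> W" "cnt S (W - {x0}) = 2 ^ card W'"
      proof -
        { assume nx: "cnt S (W - {x}) \<noteq> 2 ^ card W'" and ny: "cnt S (W - {y}) \<noteq> 2 ^ card W'"
          have "2 * cnt S (W - {x}) \<le> 2 ^ card W'" using isp_half[OF pw ubx nx] WE by auto
          moreover have "2 * cnt S (W - {y}) \<le> 2 ^ card W'" using isp_half[OF pw uby ny] WE by auto
          moreover have "(0::nat) < 2 ^ card W'" by simp
          ultimately have False using c1 c3 c4 cW pw2 by linarith }
        then show ?thesis using that xy by blast
      qed
      define W0 where "W0 = W - {x0}"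
      have W0p: "W0 \<subset> W" using x0 unfolding W0_def by auto
      have W0E: "W0 \<subseteq> E" using WE W0_def by auto
      have cardW0: "card W0 = card W - 1" using x0 fW W0_def by auto
      have W0ne: "W0 \<noteq> {}" using cardW0 c2 by auto
      have cW0: "cnt S W0 = 2 ^ (card W0 - 1)" using x0 cardW0 cW' W0_def by simp
      obtain e where e: "e \<in> W0" "\<forall>y\<in>W0. y \<noteq> e \<longrightarrow> {e, y} \<in> S"
        using psubset.IH[OF W0p W0E W0ne cW0] by blast
      have ex0: "e \<noteq> x0" using e W0_def by auto
      show ?thesis
      proof (cases "{e, x0} \<in> S")
        case ex0S: True
        have "\<forall>y\<in>W. y \<noteq> e \<longrightarrow> {e, y} \<in> S"
        proof (intro ballI impI)
          fix y assume yW: "y \<in> W" and ye: "y \<noteq> e"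
          show "{e, y} \<in> S"
          proof (cases "y = x0")
            case True then show ?thesis using ex0S by simp
          next
            case False
            then have "y \<in> W0" using yW W0_def by simp
            then show ?thesis using e(2) ye by simp
          qed
        qed
        moreover have "e \<in> W" using e(1) W0_def by simp
        ultimately show ?thesis by blast
      next
        case False
        note nex0 = False
        define U where "U = W0 - {e}"
        have fU: "finite U" using fW U_def W0_def by simp
        have x0U: "x0 \<notin> U" "e \<notin> U" using U_def W0_def by auto
        have UE: "U \<subseteq> E" using W0E U_def by auto
        have WU: "W = insert x0 (insert e U)" using x0 e U_def W0_def by auto
        have cardW: "card W = card U + 2" using WU fU x0U ex0 by simp
        have ex: "ind S X + ind S (insert e X) = 1" if "X \<subseteq> U" for X
          using dom_exact[OF ns W0E e(1) e(2)] that unfolding U_def by simp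
        define p where "p X = ind S (insert x0 X) + ind S (insert x0 (insert e X))" for X
        have p2: "p X \<le> 2" for X using ind_le1[of S "insert x0 X"] ind_le1[of S "insert x0 (insert e X)"] unfolding p_def by simp
        have F1: "cnt S (insert x0 (insert e Z)) = 2 ^ card Z + (\<Sum>Y\<in>Pow Z. p Y)" if Z: "Z \<subseteq> U" for Z
        proof -
          have fZ: "finite Z" using Z fU finite_subset by blast
          have x0Z: "x0 \<notin> insert e Z" using Z x0U ex0 by auto
          have eZ: "e \<notin> Z" using Z x0U by auto
          have a1: "cnt S (insert x0 (insert e Z)) = cnt S (insert e Z) + (\<Sum>Y\<in>Pow (insert e Z). ind S (insert x0 Y))"
            using fZ by (intro cnt_insert[OF _ x0Z]) simp
          have "cnt S (insert e Z) = (\<Sum>Y\<in>Pow Z. ind S Y + ind S (insert e Y))"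
            using cnt_insert2[OF fZ eZ] .
          also have "\<dots> = (\<Sum>Y\<in>Pow Z. 1)" using ex Z by (intro sum.cong) auto
          also have "\<dots> = 2 ^ card Z" using fZ by (simp add: card_Pow)
          finally have a2: "cnt S (insert e Z) = 2 ^ card Z" .
          have "(\<Sum>Y\<in>Pow (insert e Z). ind S (insert x0 Y)) =
              (\<Sum>Y\<in>Pow Z. ind S (insert x0 Y)) + (\<Sum>Y\<in>Pow Z. ind S (insert x0 (insert e Y)))"
            using sum_Pow_insert[OF fZ eZ] .
          also have "\<dots> = (\<Sum>Y\<in>Pow Z. p Y)" unfolding p_def by (simp add: sum.distrib)
          finally have a3: "(\<Sum>Y\<in>Pow (insert e Z). ind S (insert x0 Y)) = (\<Sum>Y\<in>Pow Z. p Y)" .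
          show ?thesis using a1 a2 a3 by simp
        qed
        have F2: "(\<Sum>Y\<in>Pow Z. p Y) = 0 \<or> (\<Sum>Y\<in>Pow Z. p Y) = 2 ^ card Z" if Z: "Z \<subseteq> U" for Z
        proof -
          have fZ: "finite Z" using Z fU finite_subset by blast
          have sub: "insert x0 (insert e Z) \<subseteq> E" using Z UE x0(1) WE e(1) W0E by blast
          have eZ: "e \<notin> Z" using Z x0U by blast
          have x0Z: "x0 \<notin> insert e Z" using Z x0U ex0 by blast
          have cz: "card (insert x0 (insert e Z)) - 1 = Suc (card Z)"
            using card_insert_disjoint[OF _ x0Z] card_insert_disjoint[OF fZ eZ] fZ by simp
          have "cnt S (insert x0 (insert e Z)) \<le> 2 ^ (card (insert x0 (insert e Z)) - 1)"
            using ub[OF ns sub] by blast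
          then have "cnt S (insert x0 (insert e Z)) \<le> 2 * 2 ^ card Z" unfolding cz by simp
          then have le: "(\<Sum>Y\<in>Pow Z. p Y) \<le> 2 ^ card Z" unfolding F1[OF Z] by simp
          have "isp (cnt S (insert x0 (insert e Z)))" by (rule pw[OF sub])
          then have "isp (2 ^ card Z + (\<Sum>Y\<in>Pow Z. p Y))" unfolding F1[OF Z] .
          then show ?thesis using isp_add le by blast
        qed
        have F3: "(\<Sum>Y\<in>Pow U. p Y) = 2 ^ card U"
        proof -
          have "cnt S W = 2 * 2 ^ card U" using cW cardW by simp
          then show ?thesis using F1[of U] WU by simp
        qed
        have x0e: "ind S (insert x0 (insert e {})) = 0" using nex0 by (simp add: ind_def insert_commute)
        have x0s: "ind S {x0} = 0" using ns x0 WE by (auto simp: ind_def)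
        have p0: "p {} = 0" using x0e x0s unfolding p_def by simp
        have F4: "\<exists>m\<in>U. {x0, m} \<in> S"
        proof (rule ccontr)
          assume nm: "\<not> (\<exists>m\<in>U. {x0, m} \<in> S)"
          have pz: "p X = 0" if "X \<subseteq> U" for X
          proof -
            have "finite X" using that fU finite_subset by blast
            then show ?thesis using that
            proof (induction X rule: finite_psubset_induct)
              case (psubset X)
              have "(\<Sum>Y\<in>Pow X. p Y) = p X + (\<Sum>Y\<in>Pow X - {X}. p Y)"
                using sum_Pow_split_top psubset.hyps by blast
              also have "(\<Sum>Y\<in>Pow X - {X}. p Y) = 0"
              proof (rule sum.neutral, rule ballI)
                fix Y assume "Y \<in> Pow X - {X}"
                then have YX: "Y \<subset> X" by auto
                then have "Y \<subseteq> U" using psubset.prems by auto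
                with YX show "p Y = 0" by (rule psubset.IH)
              qed
              finally have sp: "(\<Sum>Y\<in>Pow X. p Y) = p X" by simp
              have alt: "p X = 0 \<or> p X = 2 ^ card X" using F2[OF psubset.prems] sp by simp
              show ?case
              proof (cases "card X \<le> 1")
                case True
                then have "X = {} \<or> (\<exists>y. X = {y})" using psubset.hyps
                  by (metis One_nat_def card_0_eq card_1_singleton_iff le_Suc_eq le_zero_eq)
                then show ?thesis
                proof
                  assume "X = {}" then show ?thesis using p0 by simp
                next
                  assume "\<exists>y. X = {y}"
                  then obtain y where y: "X = {y}" by blast
                  then have "y \<in> U" using psubset.prems by auto
                  then have "ind S (insert x0 {y}) = 0" using nm by (auto simp: ind_def)
                  then have "p X \<le> 1" using y ind_le1[of S] unfolding p_def by simp
                  then show ?thesis using alt y by auto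
                qed
              next
                case False
                then have "(2::nat) ^ card X \<ge> 2 ^ 2" by (intro power_increasing) auto
                then show ?thesis using alt p2[of X] by auto
              qed
            qed
          qed
          have "(\<Sum>Y\<in>Pow U. p Y) = 0" using pz by (intro sum.neutral) auto
          then show False using F3 by simp
        qed
        then obtain m where m: "m \<in> U" "{x0, m} \<in> S" by blast
        have mE: "m \<in> E" using m UE by auto
        have xm1: "ind S (insert x0 {m}) = 1" using m by (simp add: ind_def)
        have pm: "p {m} = 2"
        proof -
          have "(\<Sum>Y\<in>Pow {m}. p Y) = p {} + p {m}" by (rule sum_Pow_single)
          then have "p {m} = 0 \<or> p {m} = 2" using F2[of "{m}"] m p0 by auto
          moreover have "p {m} \<ge> 1" using xm1 unfolding p_def by simp
          ultimately show ?thesis by auto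
        qed
        have dom: "\<forall>y\<in>W. y \<noteq> m \<longrightarrow> {m, y} \<in> S"
        proof (intro ballI impI)
          fix y assume yW: "y \<in> W" and ym: "y \<noteq> m"
          show "{m, y} \<in> S"
          proof (cases "y = x0")
            case True then show ?thesis using m by (simp add: insert_commute)
          next
            case yx0: False
            show ?thesis
            proof (cases "y = e")
              case True
              have "ind S {m} = 0" using ns mE by (simp add: ind_def)
              then have "ind S (insert e {m}) = 1" using ex[of "{m}"] m by simp
              then show ?thesis using True by (simp add: ind_def insert_commute split: if_splits)
            next
              case False
              have "y \<in> insert x0 (insert e U)" using yW WU by simp
              then have yU: "y \<in> U" using yx0 False by simp
              have py: "p {y} = 0 \<or> p {y} = 2"
                using F2[of "{y}"] yU sum_Pow_single[of p y] p0 by auto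
              have "(\<Sum>Y\<in>Pow {m, y}. p Y) = p {} + p {y} + p {m} + p {m, y}"
                using sum_Pow_pair ym by metis
              then have "p {y} + p {m, y} = 2" using F2[of "{m, y}"] yU m ym pm p0 by auto
              then have key: "ind S (insert x0 {y}) + ind S (insert x0 {m, y}) = 1"
                using py ind_le1[of S "insert x0 {y}"] ind_le1[of S "insert x0 {m, y}"]
                  ind_le1[of S "insert x0 (insert e {y})"] ind_le1[of S "insert x0 (insert e {m, y})"]
                unfolding p_def by auto
              have sub: "insert x0 {m, y} \<subseteq> E" using yU m UE x0 WE by auto
              have x0my: "x0 \<notin> {m, y}" using yU m(1) x0U by auto
              have cd: "card (insert x0 {m, y}) = 3" using ym x0my by simp
              have s1: "cnt S (insert x0 {m, y}) = cnt S {m, y} + (\<Sum>Y\<in>Pow {m, y}. ind S (insert x0 Y))"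
                by (rule cnt_insert[OF _ x0my]) simp
              have s2: "cnt S {m, y} = ind S {} + ind S {y} + ind S {m} + ind S {m, y}"
                unfolding cnt_def using sum_Pow_pair ym by metis
              have s3: "(\<Sum>Y\<in>Pow {m, y}. ind S (insert x0 Y)) =
                  ind S (insert x0 {}) + ind S (insert x0 {y}) + ind S (insert x0 {m}) + ind S (insert x0 {m, y})"
                using sum_Pow_pair ym by metis
              have i1: "ind S {} = 1" using empty_in by (simp add: ind_def)
              have iy: "ind S {y} = 0" using ns yU UE by (auto simp: ind_def)
              have im: "ind S {m} = 0" using ns mE by (simp add: ind_def)
              have c3: "cnt S (insert x0 {m, y}) = 3 + ind S {m, y}"
                using s1 s2 s3 key xm1 x0s i1 iy im by simp
              have c4: "cnt S (insert x0 {m, y}) \<le> 4" using ub[OF ns sub] cd by simp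
              have c5: "isp (cnt S (insert x0 {m, y}))" using pw[OF sub] .
              have "ind S {m, y} = 1"
              proof (rule ccontr)
                assume "ind S {m, y} \<noteq> 1"
                then have "ind S {m, y} = 0" using ind_le1[of S "{m, y}"] by simp
                then have "isp 3" using c3 c5 by simp
                then show False using isp_odd[of 3] by simp
              qed
              then show ?thesis by (simp add: ind_def split: if_splits)
            qed
          qed
        qed
        have "m \<in> W" using m(1) WU by simp
        then show ?thesis using dom by blast
      qed
    qed
  qed
qed

end

lemma indS_ind: "indS S X = real (ind S X)"
  by (simp add: indS_def ind_def)

theorem theorem6:
  fixes E :: "'a set" and S :: "'a set set" and n :: nat
  assumes "powerful E S"
    and "card E = n"
    and "rankS E S E = real n - 1"
  shows "\<exists>e\<in>E. deletable E S e"
proof -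
  have finE: "finite E" and subE: "S \<subseteq> Pow E"
    and pwc: "\<And>X. X \<subseteq> E \<Longrightarrow> \<exists>k::nat. card {Y \<in> S. Y \<subseteq> X} = 2 ^ k"
    using assms(1) unfolding powerful_def by auto
  have pwX: "isp (cnt S X)" if "X \<subseteq> E" for X
  proof -
    have "finite X" using that finE finite_subset by blast
    then show ?thesis using pwc[OF that] cnt_card[of X S] unfolding isp_def by metis
  qed
  interpret P: pws E S using finE subE pwX by unfold_locales auto
  have e0: "{Y \<in> S. Y \<subseteq> E - E} = {{}}" using P.empty_in by auto
  have sS: "{Y \<in> S. Y \<subseteq> E} = S" using subE by auto
  have cS: "card S = cnt S E" using cnt_card[OF finE, of S] sS by simp
  obtain k where k: "cnt S E = 2 ^ k" using pwX[of E] unfolding isp_def by auto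
  have "rankS E S E = log 2 (real (2 ^ k))" unfolding rankS_def using e0 cS k by simp
  also have "\<dots> = real k" by simp
  finally have "real k = real n - 1" using assms(3) by simp
  then have nk: "n = k + 1" by linarith
  have Ene: "E \<noteq> {}" using nk assms(2) by auto
  have cE: "cnt S E = 2 ^ (card E - 1)" using k nk assms(2) by simp
  show ?thesis
  proof (cases "\<exists>e\<in>E. {e} \<in> S")
    case True
    then obtain e where e: "e \<in> E" "{e} \<in> S" by blast
    have d0: "delg S e {} = 2" unfolding delg_def indS_def using P.empty_in e by simp
    have "deletable E S e" unfolding deletable_def
    proof (intro conjI allI impI)
      show "e \<in> E" by fact
      fix X assume X: "X \<subseteq> E - {e}"
      have "X \<in> S \<longleftrightarrow> insert e X \<in> S" using P.singleton_toggle[OF e X] .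
      then have "delg S e X = 0 \<or> delg S e X = 2" unfolding delg_def indS_def by auto
      then show "1 / delg S e {} * delg S e X \<in> {0, 1}" using d0 by auto
    qed
    then show ?thesis using e by blast
  next
    case False
    then have ns: "\<forall>x\<in>E. {x} \<notin> S" by blast
    obtain e where e: "e \<in> E" "\<forall>y\<in>E. y \<noteq> e \<longrightarrow> {e, y} \<in> S"
      using P.main_dom[OF ns order_refl Ene cE] by blast
    have d0: "delg S e {} = 1" unfolding delg_def indS_def using P.empty_in e ns by simp
    have "deletable E S e" unfolding deletable_def
    proof (intro conjI allI impI)
      show "e \<in> E" by fact
      fix X assume X: "X \<subseteq> E - {e}"
      have "ind S X + ind S (insert e X) = 1" using P.dom_exact[OF ns order_refl e(1) e(2) X] .
      then have "delg S e X = 1" unfolding delg_def indS_ind by simp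
      then show "1 / delg S e {} * delg S e X \<in> {0, 1}"
        unfolding d0 by simp
    qed
    then show ?thesis using e by blast
  qed
qed

end
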